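(* The set $\mathtt{SUR}$ of surjective cellular automata is closed in $(\mathtt{CA},\delta)$: for every non-surjective $c\in\mathtt{CA}$ there is $\epsilon>0$ such that $\delta(c,d)\ge\epsilon$ for all $d\in\mathtt{SUR}$.
   Context: $\Sigma$ is a finite alphabet with $|\Sigma|\ge2$, $N(r)=[-r,r]$. A cellular automaton (CA) is a map $c:\Sigma^\mathbb{Z}\to\Sigma^\mathbb{Z}$ of the form $c(x)_i=F(x_{[i-r,i+r]})$ for a local function $F:\Sigma^{N(r)}\to\Sigma$. $\mathtt{CA}$ is the set of all CA, $\mathtt{SUR}$ the surjective ones. For $c,d\in\mathtt{CA}$ with common radius $r$, $D^c_d$ is the set of $w\in\Sigma^{N(r)}$ on which the local rules of $c$ and $d$ give different outputs, and $\delta(c,d)=|D^c_d|/|\Sigma|^{2r+1}$ (independent of $r$). *)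

theory Defs
  imports Complex_Main "HOL-Library.FuncSet"
begin

definition nbhd :: "nat \<Rightarrow> int set" where
  "nbhd r = {- int r .. int r}"

definition patterns :: "nat \<Rightarrow> (int \<Rightarrow> 'a) set" where
  "patterns r = PiE (nbhd r) (\<lambda>_. UNIV)"

definition has_radius :: "((int \<Rightarrow> 'a) \<Rightarrow> (int \<Rightarrow> 'a)) \<Rightarrow> nat \<Rightarrow> bool" where
  "has_radius c r \<longleftrightarrow> (\<exists>F :: (int \<Rightarrow> 'a) \<Rightarrow> 'a.
      \<forall>x i. c x i = F (restrict (\<lambda>j. x (i + j)) (nbhd r)))"

definition is_CA :: "((int \<Rightarrow> 'a) \<Rightarrow> (int \<Rightarrow> 'a)) \<Rightarrow> bool" where
  "is_CA c \<longleftrightarrow> (\<exists>r. has_radius c r)"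

text \<open>The local rule of c on a pattern w in patterns r (for r a radius of c) is c(w)_0.\<close>
definition local_rule :: "((int \<Rightarrow> 'a) \<Rightarrow> (int \<Rightarrow> 'a)) \<Rightarrow> (int \<Rightarrow> 'a) \<Rightarrow> 'a" where
  "local_rule c w = c w 0"

definition common_radius :: "((int \<Rightarrow> 'a) \<Rightarrow> (int \<Rightarrow> 'a)) \<Rightarrow> ((int \<Rightarrow> 'a) \<Rightarrow> (int \<Rightarrow> 'a)) \<Rightarrow> nat" where
  "common_radius c d = (LEAST r. has_radius c r \<and> has_radius d r)"

definition disagree :: "nat \<Rightarrow> ((int \<Rightarrow> 'a) \<Rightarrow> (int \<Rightarrow> 'a)) \<Rightarrow> ((int \<Rightarrow> 'a) \<Rightarrow> (int \<Rightarrow> 'a)) \<Rightarrow> (int \<Rightarrow> 'a) set" where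
  "disagree r c d = {w \<in> patterns r. local_rule c w \<noteq> local_rule d w}"

definition delta :: "((int \<Rightarrow> 'a::finite) \<Rightarrow> (int \<Rightarrow> 'a)) \<Rightarrow> ((int \<Rightarrow> 'a) \<Rightarrow> (int \<Rightarrow> 'a)) \<Rightarrow> real" where
  "delta c d = (let r = common_radius c d in
      real (card (disagree r c d)) / real (card (UNIV :: 'a set)) ^ (2 * r + 1))"

end

theory Submission
  imports Defs
begin

lemma hr_local:
  assumes "has_radius d R" "\<forall>t\<in>nbhd R. x (i+t) = x' (i'+t)"
  shows "d x i = d x' i'"
proof -
  obtain F where F: "\<forall>x i. d x i = F (restrict (\<lambda>j. x (i + j)) (nbhd R))"
    using assms(1) unfolding has_radius_def by blast
  have "restrict (\<lambda>j. x (i + j)) (nbhd R) = restrict (\<lambda>j. x' (i' + j)) (nbhd R)"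
    using assms(2) by (auto intro: restrict_ext)
  thus ?thesis using F by simp
qed

lemma hr_local_rule:
  assumes "has_radius c R"
  shows "c x i = local_rule c (restrict (\<lambda>j. x(i+j)) (nbhd R))"
  unfolding local_rule_def by (rule hr_local[OF assms]) simp

lemma hr_mono:
  fixes c :: "(int \<Rightarrow> 'a) \<Rightarrow> int \<Rightarrow> 'a"
  assumes "has_radius c r" "r \<le> r'"
  shows "has_radius c r'"
proof -
  obtain F where F: "\<forall>x i. c x i = F (restrict (\<lambda>j. x (i + j)) (nbhd r))"
    using assms(1) unfolding has_radius_def by blast
  have sub: "nbhd r \<subseteq> nbhd r'" using assms(2) by (auto simp: nbhd_def)
  show ?thesis unfolding has_radius_def
  proof (intro exI[of _ "\<lambda>w. F (restrict w (nbhd r))"] allI)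
    fix x :: "int \<Rightarrow> 'a" and i :: int
    have "restrict (restrict (\<lambda>j. x (i + j)) (nbhd r')) (nbhd r) = restrict (\<lambda>j. x (i + j)) (nbhd r)"
      using sub by (simp add: Int_absorb1)
    thus "c x i = F (restrict (restrict (\<lambda>j. x (i + j)) (nbhd r')) (nbhd r))" using F by simp
  qed
qed

lemma common:
  assumes "is_CA c" "is_CA d"
  shows "has_radius c (common_radius c d) \<and> has_radius d (common_radius c d)"
proof -
  obtain r1 r2 where "has_radius c r1" "has_radius d r2" using assms unfolding is_CA_def by blast
  hence "has_radius c (max r1 r2) \<and> has_radius d (max r1 r2)" using hr_mono by fastforce
  thus ?thesis unfolding common_radius_def by (rule LeastI)
qed

lemma pigeon:
  fixes Q :: "'b \<Rightarrow> nat \<Rightarrow> bool"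
  assumes "finite V" "\<forall>M. \<exists>v\<in>V. Q v M" "\<And>v M M'. Q v M \<Longrightarrow> M' \<le> M \<Longrightarrow> Q v M'"
  shows "\<exists>v\<in>V. \<forall>M. Q v M"
proof (rule ccontr)
  assume "\<not> ?thesis"
  hence "\<forall>v\<in>V. \<exists>M. \<not> Q v M" by blast
  then obtain f where f: "\<And>v. v \<in> V \<Longrightarrow> \<not> Q v (f v)" by metis
  obtain v where v: "v \<in> V" "Q v (Max (f ` V))" using assms(2) by blast
  have "f v \<le> Max (f ` V)" using v(1) assms(1) by simp
  thus False using assms(3)[OF v(2)] f v(1) by blast
qed

lemma orphan:
  fixes c :: "(int \<Rightarrow> 'a::finite) \<Rightarrow> int \<Rightarrow> 'a"
  assumes hr: "has_radius c r" and ns: "\<not> surj c"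
  shows "\<exists>m::nat. \<exists>u. \<forall>x. \<exists>i\<in>{-int m..int m}. c x i \<noteq> u i"
proof (rule ccontr)
  assume nt: "\<not> ?thesis"
  from ns obtain y where y: "y \<notin> range c" by blast
  define I where "I n = {-int n..int n}" for n :: nat
  from nt have all: "\<forall>M. \<exists>x. \<forall>i\<in>I M. c x i = y i" unfolding I_def by blast
  define P where "P n v \<longleftrightarrow> (\<forall>M::nat. \<exists>x. restrict x (I n) = v \<and> (\<forall>i\<in>I M. c x i = y i))" for n v
  have Imono: "M' \<le> M \<Longrightarrow> I M' \<subseteq> I M" for M M' unfolding I_def by auto
  have fin: "finite ((\<lambda>x. restrict x (I n)) ` S)" for n and S :: "(int \<Rightarrow> 'a) set"
  proof (rule finite_subset)
    show "(\<lambda>x. restrict x (I n)) ` S \<subseteq> PiE (I n) (\<lambda>_. UNIV)" by auto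
    show "finite (PiE (I n) (\<lambda>_. UNIV :: 'a set))" by (rule finite_PiE) (auto simp: I_def)
  qed
  have base: "\<exists>v. P 0 v"
  proof -
    have "\<exists>v\<in>(\<lambda>x. restrict x (I 0)) ` UNIV. \<forall>M. \<exists>x. restrict x (I 0) = v \<and> (\<forall>i\<in>I M. c x i = y i)"
    proof (rule pigeon[OF fin])
      show "\<forall>M. \<exists>v\<in>(\<lambda>x. restrict x (I 0)) ` UNIV. \<exists>x. restrict x (I 0) = v \<and> (\<forall>i\<in>I M. c x i = y i)"
        using all by blast
      show "\<exists>x. restrict x (I 0) = v \<and> (\<forall>i\<in>I M'. c x i = y i)"
        if "\<exists>x. restrict x (I 0) = v \<and> (\<forall>i\<in>I M. c x i = y i)" "M' \<le> M" for v M M'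
        using that Imono[OF that(2)] by blast
    qed
    thus ?thesis unfolding P_def by blast
  qed
  have step: "\<exists>v'. restrict v' (I n) = v \<and> P (Suc n) v'" if Pv: "P n v" for n v
  proof -
    have "\<exists>v'\<in>(\<lambda>x. restrict x (I (Suc n))) ` {x. restrict x (I n) = v}.
       \<forall>M. \<exists>x. restrict x (I (Suc n)) = v' \<and> (\<forall>i\<in>I M. c x i = y i)"
    proof (rule pigeon[OF fin])
      show "\<forall>M. \<exists>v'\<in>(\<lambda>x. restrict x (I (Suc n))) ` {x. restrict x (I n) = v}.
         \<exists>x. restrict x (I (Suc n)) = v' \<and> (\<forall>i\<in>I M. c x i = y i)"
        using Pv unfolding P_def by blast
      show "\<exists>x. restrict x (I (Suc n)) = v' \<and> (\<forall>i\<in>I M'. c x i = y i)"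
        if "\<exists>x. restrict x (I (Suc n)) = v' \<and> (\<forall>i\<in>I M. c x i = y i)" "M' \<le> M" for v' M M'
        using that Imono[OF that(2)] by blast
    qed
    then obtain x0 v' where x0: "restrict x0 (I n) = v" "v' = restrict x0 (I (Suc n))"
      and Q: "\<forall>M. \<exists>x. restrict x (I (Suc n)) = v' \<and> (\<forall>i\<in>I M. c x i = y i)" by blast
    have "restrict v' (I n) = v" using x0 Imono[of n "Suc n"] by (simp add: Int_absorb1)
    moreover have "P (Suc n) v'" using Q unfolding P_def by blast
    ultimately show ?thesis by blast
  qed
  define vs where "vs = rec_nat (SOME v. P 0 v) (\<lambda>n v. SOME v'. restrict v' (I n) = v \<and> P (Suc n) v')"
  have vs0: "vs 0 = (SOME v. P 0 v)" by (simp add: vs_def)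
  have vsS: "vs (Suc n) = (SOME v'. restrict v' (I n) = vs n \<and> P (Suc n) v')" for n by (simp add: vs_def)
  have Pvs: "P n (vs n)" for n
  proof (induction n)
    case 0 show ?case unfolding vs0 using base by (rule someI_ex)
  next
    case (Suc n) show ?case unfolding vsS using someI_ex[OF step[OF Suc]] by blast
  qed
  have res: "restrict (vs (Suc n)) (I n) = vs n" for n
    unfolding vsS using someI_ex[OF step[OF Pvs]] by blast
  have self: "restrict (vs n) (I n) = vs n" for n
  proof -
    obtain x where "restrict x (I n) = vs n" using Pvs[of n] unfolding P_def by blast
    thus ?thesis by (metis Int_absorb restrict_restrict)
  qed
  have coh: "restrict (vs n') (I n) = vs n" if "n \<le> n'" for n n'
    using that
  proof (induction n')
    case 0 thus ?case using self[of 0] by simp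
  next
    case (Suc n')
    show ?case
    proof (cases "n = Suc n'")
      case True thus ?thesis using self[of n] by simp
    next
      case False
      hence "n \<le> n'" using Suc.prems by simp
      have "restrict (vs (Suc n')) (I n) = restrict (restrict (vs (Suc n')) (I n')) (I n)"
        using Imono[OF \<open>n \<le> n'\<close>] by (simp add: Int_absorb1 Int_absorb2)
      also have "\<dots> = vs n" by (simp only: res Suc.IH[OF \<open>n \<le> n'\<close>])
      finally show ?thesis .
    qed
  qed
  define X where "X i = vs (nat \<bar>i\<bar>) i" for i
  have Xvs: "X i = vs n i" if "i \<in> I n" for i n
  proof -
    have "nat \<bar>i\<bar> \<le> n" using that unfolding I_def by auto
    hence "vs (nat \<bar>i\<bar>) = restrict (vs n) (I (nat \<bar>i\<bar>))" using coh by simp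
    moreover have "i \<in> I (nat \<bar>i\<bar>)" unfolding I_def by auto
    ultimately show ?thesis unfolding X_def by simp
  qed
  have "c X = y"
  proof
    fix i
    define n where "n = nat \<bar>i\<bar> + r"
    obtain x where x: "restrict x (I n) = vs n" "\<forall>j\<in>I (nat \<bar>i\<bar>). c x j = y j"
      using Pvs[of n] unfolding P_def by blast
    have "c X i = c x i"
    proof (rule hr_local[OF hr], intro ballI)
      fix t assume "t \<in> nbhd r"
      hence it: "i + t \<in> I n" unfolding nbhd_def I_def n_def by auto
      have "x (i+t) = restrict x (I n) (i+t)" using it by simp
      thus "X (i + t) = x (i + t)" using Xvs[OF it] x(1) by simp
    qed
    also have "\<dots> = y i"
    proof -
      have "i \<in> I (nat \<bar>i\<bar>)" unfolding I_def by auto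
      thus ?thesis using x(2) by blast
    qed
    finally show "c X i = y i" .
  qed
  thus False using y by blast
qed

lemma num_lemma:
  fixes a b :: nat
  assumes b1: "1 \<le> b" and all: "\<forall>k. b^(k-1) \<le> a^k"
  shows "b \<le> a"
proof (rule ccontr)
  assume "\<not> b \<le> a"
  hence ab: "a < b" by simp
  define r where "r = real a / real b"
  have r0: "0 \<le> r" and r1: "r < 1" using ab b1 unfolding r_def by auto
  have "(\<lambda>n. r^n) \<longlonglongrightarrow> 0" by (rule LIMSEQ_power_zero) (use r0 r1 in simp)
  hence "eventually (\<lambda>n. r^n < 1 / real b) sequentially"
    by (rule order_tendstoD) (use b1 in simp)
  then obtain N where N: "\<forall>n\<ge>N. r^n < 1 / real b" unfolding eventually_sequentially by blast
  hence lt: "r^Suc N < 1 / real b" using le_Suc_eq by blast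
  have "b^N \<le> a^(Suc N)" using all[rule_format, of "Suc N"] by simp
  hence le: "real b ^ N \<le> real a ^ Suc N" by (metis of_nat_le_iff of_nat_power)
  have bp: "0 < real b" using b1 by simp
  have "1 / real b \<le> r^Suc N"
  proof -
    have "r^Suc N = real a ^ Suc N / (real b * real b ^ N)" unfolding r_def by (simp add: power_divide)
    also have "\<dots> \<ge> real b ^ N / (real b * real b ^ N)"
      using le bp by (intro divide_right_mono) auto
    also have "real b ^ N / (real b * real b ^ N) = 1 / real b" using bp by simp
    finally show ?thesis .
  qed
  thus False using lt by simp
qed

lemma divmod_block:
  fixes a j L :: int
  assumes "0 < L" "0 \<le> a" "a < L"
  shows "(a + j * L) div L = j" "(a + j * L) mod L = a"
  using assms by simp_all

lemma balance_k:
  fixes d :: "(int \<Rightarrow> 'a::finite) \<Rightarrow> int \<Rightarrow> 'a" and m R k :: nat and u :: "int \<Rightarrow> 'a"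
  assumes hr: "has_radius d R" and sd: "surj d"
  shows "(card (UNIV :: 'a set)^(2*R))^(k-1) \<le> card {p \<in> PiE {-int(m+R)..int(m+R)} (\<lambda>_. UNIV). \<forall>i\<in>{-int m..int m}. d p i = u i} ^ k"
proof -
  define J where "J = {-int(m+R)..int(m+R)}"
  define A where "A = {p \<in> PiE J (\<lambda>_. UNIV). \<forall>i\<in>{-int m..int m}. d p i = u i}"
  define L where "L = int (2*(m+R)+1)"
  have L0: "0 < L" unfolding L_def by simp
  have Le: "L = 2 * int (m+R) + 1" unfolding L_def by simp
  define W where "W = PiE {1..int(2*R)} (\<lambda>_. UNIV :: 'a set)"
  define H where "H = PiE {0..<k-1} (\<lambda>_. W)"
  define y where "y h i = (let j = nat ((i+int m) div L); s = (i + int m) mod L in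
     if s \<le> 2*int m then u (s - int m) else h j (s - 2*int m))" for h :: "nat \<Rightarrow> int \<Rightarrow> 'a" and i
  define X where "X h = (SOME x. d x = y h)" for h
  have dX: "d (X h) = y h" for h
  proof -
    have "\<exists>x. d x = y h" using sd by (metis surj_def)
    thus ?thesis unfolding X_def by (rule someI_ex)
  qed
  define blk where "blk x j = restrict (\<lambda>s. x (s + int j * L)) J" for x :: "int \<Rightarrow> 'a" and j
  define \<Phi> where "\<Phi> h = restrict (\<lambda>j. blk (X h) j) {0..<k}" for h
  have yblock: "y h (s + int j * L) = u s" if "s \<in> {-int m..int m}" for h s j
  proof -
    have e: "s + int j * L + int m = (s + int m) + int j * L" by simp
    have "0 \<le> s + int m" "s + int m < L" using that unfolding L_def by auto
    note dm = divmod_block[OF L0 this]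
    show ?thesis unfolding y_def Let_def e dm using that by auto
  qed
  have blkA: "blk (X h) j \<in> A" for h j
  proof -
    have "blk (X h) j \<in> PiE J (\<lambda>_. UNIV)" unfolding blk_def by simp
    moreover have "d (blk (X h) j) s = u s" if s: "s \<in> {-int m..int m}" for s
    proof -
      have "d (blk (X h) j) s = d (X h) (s + int j * L)"
      proof (rule hr_local[OF hr], intro ballI)
        fix t assume "t \<in> nbhd R"
        hence "s + t \<in> J" using s unfolding nbhd_def J_def by auto
        thus "blk (X h) j (s + t) = X h (s + int j * L + t)" unfolding blk_def
          by (simp add: algebra_simps)
      qed
      also have "\<dots> = u s" using dX yblock[OF s] by simp
      finally show ?thesis .
    qed
    ultimately show ?thesis unfolding A_def by blast
  qed
  have \<Phi>A: "\<Phi> h \<in> PiE {0..<k} (\<lambda>_. A)" for h unfolding \<Phi>_def using blkA by auto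
  have inj: "inj_on \<Phi> H"
  proof
    fix h h' assume hH: "h \<in> H" and hH': "h' \<in> H" and eq: "\<Phi> h = \<Phi> h'"
    have eqblk: "X h (s + int j * L) = X h' (s + int j * L)" if "j < k" "s \<in> J" for j s
    proof -
      have "blk (X h) j = blk (X h') j" using fun_cong[OF eq, of j] that(1) unfolding \<Phi>_def by simp
      from fun_cong[OF this, of s] show ?thesis using that(2) unfolding blk_def by simp
    qed
    have eqJk: "X h i = X h' i" if i1: "-int(m+R) \<le> i" and i2: "i \<le> int k * L - L + int(m+R)" for i
    proof -
      define j where "j = (i + int(m+R)) div L"
      define s0 where "s0 = (i + int(m+R)) mod L"
      have dec: "i + int(m+R) = j * L + s0" unfolding j_def s0_def by simp
      have s0b: "0 \<le> s0" "s0 < L" unfolding s0_def using L0 by simp_all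
      have j0: "0 \<le> j" unfolding j_def using L0 i1 by (simp add: pos_imp_zdiv_nonneg_iff)
      have "j * L < int k * L" using dec s0b i2 Le by (smt (verit))
      hence jk: "j < int k" using L0 by (simp add: mult_less_cancel_right)
      have sJ: "s0 - int(m+R) \<in> J" using s0b unfolding J_def L_def by auto
      have "X h (s0 - int(m+R) + int (nat j) * L) = X h' (s0 - int(m+R) + int (nat j) * L)"
        using eqblk[OF _ sJ, of "nat j"] jk j0 by simp
      moreover have "s0 - int(m+R) + int (nat j) * L = i" using dec j0 by simp
      ultimately show ?thesis by simp
    qed
    show "h = h'"
    proof (rule PiE_ext[OF hH[unfolded H_def] hH'[unfolded H_def]])
      fix j assume j: "j \<in> {0..<k-1}"
      have hj: "h j \<in> W" "h' j \<in> W" using hH hH' j unfolding H_def by auto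
      show "h j = h' j"
      proof (rule PiE_ext[OF hj[unfolded W_def]])
        fix t assume t: "t \<in> {1..int(2*R)}"
        define i where "i = int j * L + int m + t"
        have yh: "y g i = g j t" for g
        proof -
          have e: "i + int m = (2 * int m + t) + int j * L" unfolding i_def by simp
          have "0 \<le> 2 * int m + t" "2 * int m + t < L" using t unfolding L_def by auto
          note dm = divmod_block[OF L0 this]
          show ?thesis unfolding y_def Let_def e dm using t by auto
        qed
        have jk: "int j + 2 \<le> int k" using j by auto
        have p1: "int j * L + 2 * L \<le> int k * L"
        proof -
          have "(int j + 2) * L \<le> int k * L" using jk L0 by (intro mult_right_mono) auto
          thus ?thesis by (simp add: algebra_simps)
        qed
        have p0: "0 \<le> int j * L" using L0 by simp
        have "d (X h) i = d (X h') i"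
        proof (rule hr_local[OF hr], intro ballI)
          fix \<tau> assume "\<tau> \<in> nbhd R"
          hence "-int R \<le> \<tau>" "\<tau> \<le> int R" unfolding nbhd_def by auto
          moreover have "1 \<le> t" "t \<le> 2 * int R" using t by auto
          moreover have Le': "L = 2 * int m + 2 * int R + 1" using Le by simp
          ultimately have "-int m - int R \<le> i + \<tau>" "i + \<tau> \<le> int k * L - L + int m + int R"
            using p0 p1 unfolding i_def by linarith+
          thus "X h (i + \<tau>) = X h' (i + \<tau>)" by (intro eqJk) simp_all
        qed
        thus "h j t = h' j t" using dX yh by simp
      qed
    qed
  qed
  have cardW: "card W = card (UNIV :: 'a set)^(2*R)" unfolding W_def by (simp add: card_PiE nat_mult_distrib)
  have cardH: "card H = (card (UNIV :: 'a set)^(2*R))^(k-1)" unfolding H_def by (simp add: card_PiE cardW)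
  have finA: "finite A"
  proof (rule finite_subset)
    show "A \<subseteq> PiE J (\<lambda>_. UNIV)" unfolding A_def by blast
    show "finite (PiE J (\<lambda>_. UNIV :: 'a set))" unfolding J_def by (rule finite_PiE) auto
  qed
  have cardT: "card (PiE {0..<k} (\<lambda>_. A)) = card A ^ k" by (simp add: card_PiE)
  have "card H \<le> card (PiE {0..<k} (\<lambda>_. A))"
    by (rule card_inj_on_le[OF inj]) (use \<Phi>A finA in \<open>auto intro: finite_PiE\<close>)
  thus ?thesis using cardH cardT unfolding A_def J_def by simp
qed

lemma balance:
  fixes d :: "(int \<Rightarrow> 'a::finite) \<Rightarrow> int \<Rightarrow> 'a" and m R :: nat and u :: "int \<Rightarrow> 'a"
  assumes hr: "has_radius d R" and sd: "surj d"
  shows "card (UNIV :: 'a set)^(2*R) \<le> card {p \<in> PiE {-int(m+R)..int(m+R)} (\<lambda>_. UNIV). \<forall>i\<in>{-int m..int m}. d p i = u i}"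
proof (rule num_lemma)
  have "card (UNIV :: 'a set) > 0" by (simp add: card_gt_0_iff)
  thus "1 \<le> card (UNIV :: 'a set)^(2*R)" by simp
  show "\<forall>k. (card (UNIV :: 'a set) ^ (2 * R)) ^ (k - 1)
          \<le> card {p \<in> PiE {-int(m+R)..int(m+R)} (\<lambda>_. UNIV). \<forall>i\<in>{-int m..int m}. d p i = u i} ^ k"
    using balance_k[OF hr sd] by blast
qed

theorem theorem4p2:
  fixes c :: "(int \<Rightarrow> 'a::finite) \<Rightarrow> (int \<Rightarrow> 'a)"
  assumes "card (UNIV :: 'a set) \<ge> 2"
    and "is_CA c"
    and "\<not> surj c"
  shows "\<exists>\<epsilon>>0. \<forall>d :: (int \<Rightarrow> 'a) \<Rightarrow> (int \<Rightarrow> 'a). is_CA d \<and> surj d \<longrightarrow> delta c d \<ge> \<epsilon>"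
proof -
  define q where "q = card (UNIV :: 'a set)"
  have q1: "q \<ge> 1" using assms(1) unfolding q_def by simp
  obtain r0 where hr0: "has_radius c r0" using assms(2) unfolding is_CA_def by blast
  obtain m :: nat and u where orph: "\<forall>x. \<exists>i\<in>{-int m..int m}. c x i \<noteq> u i"
    using orphan[OF hr0 assms(3)] by blast
  define \<epsilon> where "\<epsilon> = 1 / (real (2*m+1) * real q ^ (2*m+1))"
  have "\<epsilon> > 0" unfolding \<epsilon>_def using q1 by simp
  moreover have "delta c d \<ge> \<epsilon>" if d: "is_CA d" "surj d" for d :: "(int \<Rightarrow> 'a) \<Rightarrow> (int \<Rightarrow> 'a)"
  proof -
    define R where "R = common_radius c d"
    have hrc: "has_radius c R" and hrd: "has_radius d R" using common[OF assms(2) d(1)] unfolding R_def by auto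
    define J where "J = {-int(m+R)..int(m+R)}"
    define P where "P = PiE J (\<lambda>_. UNIV :: 'a set)"
    define A where "A = {p \<in> P. \<forall>i\<in>{-int m..int m}. d p i = u i}"
    define D where "D = disagree R c d"
    define B where "B i = {p \<in> P. restrict (\<lambda>j. p (i+j)) (nbhd R) \<in> D}" for i
    have bal: "q^(2*R) \<le> card A" unfolding q_def A_def P_def J_def by (rule balance[OF hrd d(2)])
    have finP: "finite P" unfolding P_def J_def by (rule finite_PiE) auto
    have finD: "finite D"
    proof (rule finite_subset)
      show "D \<subseteq> patterns R" unfolding D_def disagree_def by blast
      show "finite (patterns R :: (int \<Rightarrow> 'a) set)" unfolding patterns_def nbhd_def by (rule finite_PiE) auto
    qed
    have sub: "A \<subseteq> (\<Union>i\<in>{-int m..int m}. B i)"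
    proof
      fix p assume pA: "p \<in> A"
      obtain i where i: "i \<in> {-int m..int m}" "c p i \<noteq> u i" using orph by blast
      have "d p i = u i" using pA i(1) unfolding A_def by blast
      hence "local_rule c (restrict (\<lambda>j. p (i+j)) (nbhd R)) \<noteq> local_rule d (restrict (\<lambda>j. p (i+j)) (nbhd R))"
        using i(2) hr_local_rule[OF hrc, of p i] hr_local_rule[OF hrd, of p i] by simp
      hence "restrict (\<lambda>j. p (i+j)) (nbhd R) \<in> D" unfolding D_def disagree_def patterns_def by simp
      thus "p \<in> (\<Union>i\<in>{-int m..int m}. B i)" using pA i(1) unfolding A_def B_def by blast
    qed
    have cardB: "card (B i) \<le> card D * q^(2*m)" if i: "i \<in> {-int m..int m}" for i
    proof -
      define K where "K = {i - int R..i + int R}"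
      have KJ: "K \<subseteq> J" using i unfolding K_def J_def by auto
      define f where "f p = (restrict (\<lambda>j. p (i+j)) (nbhd R), restrict p (J - K))" for p :: "int \<Rightarrow> 'a"
      have inj: "inj_on f (B i)"
      proof
        fix p p' assume p: "p \<in> B i" and p': "p' \<in> B i" and eq: "f p = f p'"
        have pP: "p \<in> P" "p' \<in> P" using p p' unfolding B_def by auto
        show "p = p'"
        proof (rule PiE_ext[OF pP[unfolded P_def]])
          fix t assume tJ: "t \<in> J"
          show "p t = p' t"
          proof (cases "t \<in> K")
            case True
            hence "t - i \<in> nbhd R" unfolding K_def nbhd_def by auto
            moreover have "restrict (\<lambda>j. p (i+j)) (nbhd R) = restrict (\<lambda>j. p' (i+j)) (nbhd R)"
              using eq unfolding f_def by simp
            ultimately have "p (i + (t - i)) = p' (i + (t - i))" by (metis restrict_apply')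
            thus ?thesis by simp
          next
            case False
            have "restrict p (J - K) = restrict p' (J - K)" using eq unfolding f_def by simp
            from fun_cong[OF this, of t] show ?thesis using False tJ by simp
          qed
        qed
      qed
      have img: "f ` B i \<subseteq> D \<times> PiE (J - K) (\<lambda>_. UNIV)" unfolding f_def B_def by (auto split: if_split_asm)
      have finT: "finite (D \<times> PiE (J - K) (\<lambda>_. UNIV :: 'a set))"
        using finD by (intro finite_cartesian_product finite_PiE) (auto simp: J_def)
      have cJK: "card (J - K) = 2*m"
      proof -
        have "card (J - K) = card J - card K" using KJ by (intro card_Diff_subset) (auto simp: K_def)
        thus ?thesis unfolding J_def K_def by simp
      qed
      have "card (B i) \<le> card (D \<times> PiE (J - K) (\<lambda>_. UNIV :: 'a set))"
        by (rule card_inj_on_le[OF inj img finT])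
      also have "\<dots> = card D * q^(2*m)"
        unfolding card_cartesian_product q_def using cJK by (simp add: card_PiE J_def)
      finally show ?thesis .
    qed
    have "card A \<le> card (\<Union>i\<in>{-int m..int m}. B i)"
      by (rule card_mono[OF _ sub]) (auto simp: B_def finP)
    also have "\<dots> \<le> (\<Sum>i\<in>{-int m..int m}. card (B i))" by (rule card_UN_le) simp
    also have "\<dots> \<le> of_nat (card {-int m..int m}) * (card D * q^(2*m))"
      by (rule sum_bounded_above) (rule cardB)
    also have "\<dots> = (2*m+1) * (card D * q^(2*m))"
    proof -
      have "nat (2 * int m + 1) = 2*m+1" by simp
      thus ?thesis by simp
    qed
    finally have key: "q^(2*R) \<le> (2*m+1) * (card D * q^(2*m))" using bal by linarith
    hence keyr: "real q^(2*R) \<le> real (2*m+1) * (real (card D) * real q^(2*m))"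
      by (metis of_nat_le_iff of_nat_mult of_nat_power)
    have qp: "real q > 0" using q1 by simp
    have dl: "delta c d = real (card D) / real q ^ (2*R+1)"
      unfolding delta_def Let_def R_def[symmetric] D_def q_def by simp
    have "\<epsilon> = real q^(2*R) / (real (2*m+1) * real q ^ (2*m+1) * real q^(2*R))"
      unfolding \<epsilon>_def using qp by simp
    also have "\<dots> \<le> real (2*m+1) * (real (card D) * real q^(2*m)) / (real (2*m+1) * real q ^ (2*m+1) * real q^(2*R))"
      using keyr qp by (intro divide_right_mono) auto
    also have "\<dots> = real (card D) / real q ^ (2*R+1)"
    proof -
      define n where "n = real (2*m+1)"
      define Q1 where "Q1 = real q^(2*m)"
      define Q2 where "Q2 = real q^(2*R)"
      have n0: "n \<noteq> 0" unfolding n_def by simp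
      have Q10: "Q1 \<noteq> 0" unfolding Q1_def using qp by simp
      have Q20: "Q2 \<noteq> 0" unfolding Q2_def using qp by simp
      have e1: "real q^(2*m+1) = real q * Q1" unfolding Q1_def by simp
      have e2: "real q^(2*R+1) = real q * Q2" unfolding Q2_def by simp
      have "n * (real (card D) * Q1) / (n * (real q * Q1) * Q2) = real (card D) / (real q * Q2)"
        using n0 Q10 Q20 qp by (simp add: field_simps)
      thus ?thesis unfolding e1 e2 n_def[symmetric] Q1_def[symmetric] Q2_def[symmetric] .
    qed
    finally show ?thesis using dl by simp
  qed
  ultimately show ?thesis by blast
qed

end
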